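(* Let $(S,d)$ be a metric space and $\bullet\in\{\mathrm{FM},\mathrm{BL}\}$. For every molecular measure $\mu=\sum_{j=1}^n a_j\delta_{s_j}$ ($n\in\mathbb{N}$, $a_j\in\mathbb{R}$, $s_j\in S$) there exists $f^\mu_\bullet\in E^S_\bullet$ such that $\|\mu\|^*_\bullet=\int_S f^\mu_\bullet\,d\mu$.
   Context: $\mathrm{BL}(S)$ is the space of bounded real-valued Lipschitz functions on $S$, $|f|_L=\sup_{x\neq y}|f(x)-f(y)|/d(x,y)$ (with $|f|_L=0$ on a singleton), $\|f\|_{\mathrm{BL}}=\|f\|_\infty+|f|_L$, $\|f\|_{\mathrm{FM}}=\max(\|f\|_\infty,|f|_L)$, $B^S_\bullet=\{f\in\mathrm{BL}(S):\|f\|_\bullet\le1\}$, and for a finite signed measure $\mu$, $\|\mu\|^*_\bullet=\sup_{f\in B^S_\bullet}\int_S f\,d\mu$. Subsets $P\subset S$ carry the restricted metric; $\operatorname{ext}$ denotes extreme points and $\operatorname{ext}_*(B^P_\bullet)=\operatorname{ext}(B^P_\bullet)\setminus\{f:|f|=\mathbf{1}\}$. For non-empty $P\subset S$, $f\in\mathrm{BL}(P)$: $\mathcal{E}^{S,0}_P f(x)=\sup_{p\in P}[f(p)-|f|_L d(p,x)]$, $\mathcal{E}^S_P f=\max(\mathcal{E}^{S,0}_P f,-\|f\|_\infty)$. $E^S_{\mathrm{BL}}=\bigcup_{P\subset S\text{ finite}}\mathcal{E}^S_P(\operatorname{ext}_*(B^P_{\mathrm{BL}}))\cup\{\mathbf{1},-\mathbf{1}\}$;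 $E^S_{\mathrm{FM}}=\bigcup_{P\subset S\text{ finite}}\mathcal{E}^S_P(\operatorname{ext}_*(B^P_{\mathrm{FM}}))\cup\{f\in B^S_{\mathrm{FM}}:|f|=\mathbf{1}\}\cup\{h_P:P\subset S\text{ finite, non-empty}\}$, with $h_P(x)=\max\big(-1,\sup_{p\in P}[1-d(x,p)]\big)$. *)

theory Defs
  imports Complex_Main
begin

text \<open>The metric space (S,d) is the type 'a with its metric dist; S = UNIV.
  A real-valued function on a subset P is represented by a function 'a \<Rightarrow> real
  that vanishes outside P (extensional representation).\<close>

datatype normkind = FM | BL

definition sup_norm :: "'a set \<Rightarrow> ('a \<Rightarrow> real) \<Rightarrow> real" where
  "sup_norm P f = (if P = {} then 0 else Sup ((\<lambda>x. \<bar>f x\<bar>) ` P))"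

definition lip_const :: "'a::metric_space set \<Rightarrow> ('a \<Rightarrow> real) \<Rightarrow> real" where
  "lip_const P f = (if \<exists>x\<in>P. \<exists>y\<in>P. x \<noteq> y
     then Sup {\<bar>f x - f y\<bar> / dist x y | x y. x \<in> P \<and> y \<in> P \<and> x \<noteq> y} else 0)"

definition is_BL :: "'a::metric_space set \<Rightarrow> ('a \<Rightarrow> real) \<Rightarrow> bool" where
  "is_BL P f \<longleftrightarrow> (\<forall>x. x \<notin> P \<longrightarrow> f x = 0) \<and> (\<exists>B. \<forall>x\<in>P. \<bar>f x\<bar> \<le> B) \<and>
     (\<exists>L. \<forall>x\<in>P. \<forall>y\<in>P. \<bar>f x - f y\<bar> \<le> L * dist x y)"

definition nrm :: "normkind \<Rightarrow> 'a::metric_space set \<Rightarrow> ('a \<Rightarrow> real) \<Rightarrow> real" where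
  "nrm k P f = (case k of
      BL \<Rightarrow> sup_norm P f + lip_const P f
    | FM \<Rightarrow> max (sup_norm P f) (lip_const P f))"

definition unit_ball :: "normkind \<Rightarrow> 'a::metric_space set \<Rightarrow> ('a \<Rightarrow> real) set" where
  "unit_ball k P = {f. is_BL P f \<and> nrm k P f \<le> 1}"

definition extreme_points :: "('a \<Rightarrow> real) set \<Rightarrow> ('a \<Rightarrow> real) set" where
  "extreme_points K = {f \<in> K. \<forall>g\<in>K. \<forall>h\<in>K. \<forall>t::real. 0 < t \<and> t < 1 \<and>
       f = (\<lambda>x. t * g x + (1 - t) * h x) \<longrightarrow> g = h}"

definition ext_star :: "normkind \<Rightarrow> 'a::metric_space set \<Rightarrow> ('a \<Rightarrow> real) set" where
  "ext_star k P = {f \<in> extreme_points (unit_ball k P). \<not> (\<forall>x\<in>P. \<bar>f x\<bar> = 1)}"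

definition ext_op :: "'a::metric_space set \<Rightarrow> ('a \<Rightarrow> real) \<Rightarrow> ('a \<Rightarrow> real)" where
  "ext_op P f = (\<lambda>x. max (Max ((\<lambda>p. f p - lip_const P f * dist p x) ` P)) (- sup_norm P f))"

definition hP :: "'a::metric_space set \<Rightarrow> ('a \<Rightarrow> real)" where
  "hP P = (\<lambda>x. max (-1) (Max ((\<lambda>p. 1 - dist x p) ` P)))"

definition E_set :: "normkind \<Rightarrow> ('a::metric_space \<Rightarrow> real) set" where
  "E_set k = (case k of
      BL \<Rightarrow> (\<Union>P\<in>{P. finite P \<and> P \<noteq> {}}. ext_op P ` ext_star BL P)
              \<union> {(\<lambda>_. 1), (\<lambda>_. -1)}
    | FM \<Rightarrow> (\<Union>P\<in>{P. finite P \<and> P \<noteq> {}}. ext_op P ` ext_star FM P)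
              \<union> {f \<in> unit_ball FM UNIV. \<forall>x. \<bar>f x\<bar> = 1}
              \<union> {hP P | P. finite P \<and> P \<noteq> {}})"

text \<open>Molecular measure \<Sum>_j a_j \<delta>_{s_j} given as the list of pairs (a_j, s_j).\<close>
definition mol_integral :: "('a \<Rightarrow> real) \<Rightarrow> (real \<times> 'a) list \<Rightarrow> real" where
  "mol_integral f mu = (\<Sum>(a, s)\<leftarrow>mu. a * f s)"

definition dual_norm :: "normkind \<Rightarrow> (real \<times> 'a::metric_space) list \<Rightarrow> real" where
  "dual_norm k mu = Sup {mol_integral f mu | f. f \<in> unit_ball k UNIV}"

end

theory Submission
  imports Defs "HOL-Analysis.Analysis"
begin


lemma sup_upper:
  assumes "is_BL S f" "x \<in> S" shows "\<bar>f x\<bar> \<le> sup_norm S f"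
proof -
  obtain B where B: "\<forall>x\<in>S. \<bar>f x\<bar> \<le> B" using assms(1) unfolding is_BL_def by blast
  have "bdd_above ((\<lambda>x. \<bar>f x\<bar>) ` S)" using B by (auto intro: bdd_aboveI)
  then show ?thesis using assms(2) unfolding sup_norm_def by (auto intro: cSup_upper)
qed

lemma ratio_set_bdd:
  assumes "is_BL S f"
  shows "bdd_above {\<bar>f x - f y\<bar> / dist x y | x y. x \<in> S \<and> y \<in> S \<and> x \<noteq> y}"
proof -
  obtain L where L: "\<forall>x\<in>S. \<forall>y\<in>S. \<bar>f x - f y\<bar> \<le> L * dist x y"
    using assms unfolding is_BL_def by blast
  have "\<bar>f x - f y\<bar> / dist x y \<le> L" if "x \<in> S" "y \<in> S" "x \<noteq> y" for x y
    using L that by (simp add: divide_le_eq)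
  then show ?thesis by (auto intro!: bdd_aboveI)
qed

lemma lip_upper:
  assumes "is_BL S f" "y \<in> S" "z \<in> S" "y \<noteq> z"
  shows "\<bar>f y - f z\<bar> / dist y z \<le> lip_const S f"
proof -
  have "\<bar>f y - f z\<bar> / dist y z \<in> {\<bar>f x - f y\<bar> / dist x y | x y. x \<in> S \<and> y \<in> S \<and> x \<noteq> y}"
    using assms by blast
  then show ?thesis using ratio_set_bdd[OF assms(1)] assms unfolding lip_const_def
    by (auto intro: cSup_upper)
qed

lemma sup_least:
  assumes "\<forall>x\<in>S. \<bar>f x\<bar> \<le> c" "0 \<le> c" shows "sup_norm S f \<le> c"
  using assms unfolding sup_norm_def by (auto intro!: cSup_least)

lemma lip_least:
  assumes "\<forall>y\<in>S. \<forall>z\<in>S. y \<noteq> z \<longrightarrow> \<bar>f y - f z\<bar> / dist y z \<le> c" "0 \<le> c"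
  shows "lip_const S f \<le> c"
  using assms unfolding lip_const_def by (auto intro!: cSup_least)

lemma sup_nonneg: assumes "is_BL S f" shows "0 \<le> sup_norm S f"
proof (cases "S = {}")
  case True then show ?thesis by (simp add: sup_norm_def)
next
  case False
  then obtain x where x: "x \<in> S" by blast
  have "\<bar>f x\<bar> \<le> sup_norm S f" using sup_upper[OF assms x] .
  then show ?thesis by linarith
qed

lemma lip_nonneg:
  assumes "is_BL S f" shows "0 \<le> lip_const S f"
proof (cases "\<exists>x\<in>S. \<exists>y\<in>S. x \<noteq> y")
  case True
  then obtain y z where "y \<in> S" "z \<in> S" "y \<noteq> z" by blast
  then have "\<bar>f y - f z\<bar> / dist y z \<le> lip_const S f" using lip_upper assms by blast
  moreover have "0 \<le> \<bar>f y - f z\<bar> / dist y z" by simp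
  ultimately show ?thesis by linarith
next
  case False then show ?thesis unfolding lip_const_def by simp
qed

lemma lip_mult:
  assumes "is_BL S f" "y \<in> S" "z \<in> S"
  shows "\<bar>f y - f z\<bar> \<le> lip_const S f * dist y z"
proof (cases "y = z")
  case True then show ?thesis using lip_nonneg[OF assms(1)] by simp
next
  case False
  then have "\<bar>f y - f z\<bar> / dist y z \<le> lip_const S f" using lip_upper assms by blast
  then show ?thesis using False by (simp add: divide_le_eq)
qed

definition cw :: "normkind \<Rightarrow> real" where "cw k = (case k of BL \<Rightarrow> 1 | FM \<Rightarrow> 0)"

definition Kc :: "normkind \<Rightarrow> 'a::metric_space set \<Rightarrow> ('a \<Rightarrow> real) set" where
  "Kc k S = {f. (\<forall>x. x \<notin> S \<longrightarrow> f x = 0) \<and> (\<forall>x\<in>S. \<bar>f x\<bar> \<le> 1) \<and>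
     (\<forall>x\<in>S. \<forall>y\<in>S. \<forall>z\<in>S. y \<noteq> z \<longrightarrow> cw k * \<bar>f x\<bar> + \<bar>f y - f z\<bar> / dist y z \<le> 1)}"

lemma Kc_iff: "f \<in> Kc k S \<longleftrightarrow> (\<forall>x. x \<notin> S \<longrightarrow> f x = 0) \<and> (\<forall>x\<in>S. \<bar>f x\<bar> \<le> 1) \<and>
     (\<forall>x\<in>S. \<forall>y\<in>S. \<forall>z\<in>S. y \<noteq> z \<longrightarrow> cw k * \<bar>f x\<bar> + \<bar>f y - f z\<bar> / dist y z \<le> 1)"
  unfolding Kc_def mem_Collect_eq by (rule refl)

lemma Kc_out: assumes "f \<in> Kc k S" "x \<notin> S" shows "f x = 0"
  using assms(1)[unfolded Kc_iff] assms(2) by simp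

lemma Kc_bnd: assumes "f \<in> Kc k S" "x \<in> S" shows "\<bar>f x\<bar> \<le> 1"
  using assms(1)[unfolded Kc_iff] assms(2) by simp

lemma Kc_tri: "f \<in> Kc k S \<Longrightarrow> x \<in> S \<Longrightarrow> y \<in> S \<Longrightarrow> z \<in> S \<Longrightarrow> y \<noteq> z \<Longrightarrow>
   cw k * \<bar>f x\<bar> + \<bar>f y - f z\<bar> / dist y z \<le> 1"
  by (drule iffD1[OF Kc_iff]) (elim conjE, (drule bspec, assumption)+, erule mp)

lemma Kc_ratio:
  assumes "f \<in> Kc k S" "y \<in> S" "z \<in> S" "y \<noteq> z"
  shows "\<bar>f y - f z\<bar> / dist y z \<le> 1"
proof -
  have "cw k * \<bar>f y\<bar> + \<bar>f y - f z\<bar> / dist y z \<le> 1" using Kc_tri[OF assms(1) assms(2) assms(2-4)] .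
  moreover have "0 \<le> cw k * \<bar>f y\<bar>" by (cases k) (auto simp: cw_def)
  ultimately show ?thesis by linarith
qed

lemma Kc_BL: assumes f: "f \<in> Kc k S" shows "is_BL S f"
proof -
  have "\<bar>f x - f y\<bar> \<le> 1 * dist x y" if "x \<in> S" "y \<in> S" for x y
  proof (cases "x = y")
    case False
    have "\<bar>f x - f y\<bar> / dist x y \<le> 1" using Kc_ratio[OF f that False] .
    moreover have "0 < dist x y" using False by simp
    ultimately show ?thesis by (simp add: divide_le_eq)
  qed simp
  then show ?thesis unfolding is_BL_def using Kc_out[OF f] Kc_bnd[OF f] by blast
qed

lemma unit_ball_Kc: "unit_ball k S = Kc k S"
proof (intro equalityI subsetI)
  fix f assume "f \<in> unit_ball k S"
  then have bl: "is_BL S f" and n: "nrm k S f \<le> 1" unfolding unit_ball_def by auto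
  have s0: "0 \<le> sup_norm S f" and l0: "0 \<le> lip_const S f" using sup_nonneg lip_nonneg bl by auto
  have "\<forall>x. x \<notin> S \<longrightarrow> f x = 0" using bl unfolding is_BL_def by blast
  moreover have "\<forall>x\<in>S. \<bar>f x\<bar> \<le> 1"
  proof
    fix x assume "x \<in> S"
    then have "\<bar>f x\<bar> \<le> sup_norm S f" using sup_upper bl by blast
    then show "\<bar>f x\<bar> \<le> 1" using n s0 l0 by (cases k) (auto simp: nrm_def)
  qed
  moreover have "\<forall>x\<in>S. \<forall>y\<in>S. \<forall>z\<in>S. y \<noteq> z \<longrightarrow> cw k * \<bar>f x\<bar> + \<bar>f y - f z\<bar> / dist y z \<le> 1"
  proof (intro ballI impI)
    fix x y z assume "x \<in> S" "y \<in> S" "z \<in> S" "y \<noteq> z"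
    then have a: "\<bar>f x\<bar> \<le> sup_norm S f" and b: "\<bar>f y - f z\<bar> / dist y z \<le> lip_const S f"
      using sup_upper lip_upper bl by blast+
    show "cw k * \<bar>f x\<bar> + \<bar>f y - f z\<bar> / dist y z \<le> 1"
      using a b n s0 l0 by (cases k) (auto simp: nrm_def cw_def)
  qed
  ultimately show "f \<in> Kc k S" unfolding Kc_iff by (intro conjI)
next
  fix f assume f: "f \<in> Kc k S"
  have bl: "is_BL S f" using Kc_BL[OF f] .
  have b1: "\<forall>x\<in>S. \<bar>f x\<bar> \<le> 1" and c: "\<forall>x\<in>S. \<forall>y\<in>S. \<forall>z\<in>S. y \<noteq> z \<longrightarrow> cw k * \<bar>f x\<bar> + \<bar>f y - f z\<bar> / dist y z \<le> 1"
    using f[unfolded Kc_iff] by simp_all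
  have s1: "sup_norm S f \<le> 1" using sup_least[OF b1] by simp
  have "nrm k S f \<le> 1"
  proof (cases k)
    case FM
    have "lip_const S f \<le> 1" using lip_least[of S f 1] Kc_ratio[OF f] by auto
    then show ?thesis using s1 FM by (simp add: nrm_def)
  next
    case BL
    have "lip_const S f \<le> 1 - sup_norm S f"
    proof (rule lip_least)
      show "0 \<le> 1 - sup_norm S f" using s1 by simp
      show "\<forall>y\<in>S. \<forall>z\<in>S. y \<noteq> z \<longrightarrow> \<bar>f y - f z\<bar> / dist y z \<le> 1 - sup_norm S f"
      proof (intro ballI impI)
        fix y z assume yz: "y \<in> S" "z \<in> S" "y \<noteq> z"
        have "\<forall>x\<in>S. \<bar>f x\<bar> \<le> 1 - \<bar>f y - f z\<bar> / dist y z"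
        proof
          fix x assume "x \<in> S"
          then have "cw k * \<bar>f x\<bar> + \<bar>f y - f z\<bar> / dist y z \<le> 1" using c yz by blast
          then show "\<bar>f x\<bar> \<le> 1 - \<bar>f y - f z\<bar> / dist y z" using BL by (simp add: cw_def)
        qed
        moreover have "0 \<le> 1 - \<bar>f y - f z\<bar> / dist y z" using Kc_ratio[OF f yz] by simp
        ultimately have "sup_norm S f \<le> 1 - \<bar>f y - f z\<bar> / dist y z" by (rule sup_least)
        then show "\<bar>f y - f z\<bar> / dist y z \<le> 1 - sup_norm S f" by simp
      qed
    qed
    then show ?thesis using BL by (simp add: nrm_def)
  qed
  then show "f \<in> unit_ball k S" using bl unfolding unit_ball_def by blast
qed




lemma mol_cong: "(\<And>s. s \<in> snd ` set mu \<Longrightarrow> f s = g s) \<Longrightarrow> mol_integral f mu = mol_integral g mu"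
  unfolding mol_integral_def by (induction mu) auto

lemma mol_Cons: "mol_integral f (x # xs) = fst x * f (snd x) + mol_integral f xs"
  unfolding mol_integral_def by (cases x) auto

lemma mol_lin: "mol_integral (\<lambda>x. t * g x + u * h x) mu = t * mol_integral g mu + u * mol_integral h mu"
  by (induction mu) (auto simp: mol_Cons algebra_simps, simp add: mol_integral_def)

lemma mol_cont: "continuous_on A (\<lambda>f. mol_integral f mu)"
proof (induction mu)
  case Nil then show ?case by (simp add: mol_integral_def)
next
  case (Cons x xs)
  have c: "continuous_on A (\<lambda>f::'a \<Rightarrow> real. f (snd x))"
    by (rule continuous_on_subset[OF continuous_on_product_coordinates]) simp
  show ?case unfolding mol_Cons by (intro continuous_intros c Cons)
qed

context
  fixes P :: "'a::metric_space set" and g :: "'a \<Rightarrow> real"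
  assumes fin: "finite P" and ne: "P \<noteq> {}" and bl: "is_BL P g"
begin

lemma Mx_le: "Max ((\<lambda>p. g p - lip_const P g * dist p x) ` P)
   \<le> Max ((\<lambda>p. g p - lip_const P g * dist p y) ` P) + lip_const P g * dist x y"
proof -
  have L0: "0 \<le> lip_const P g" using lip_nonneg[OF bl] .
  have "\<forall>p\<in>P. g p - lip_const P g * dist p x \<le> Max ((\<lambda>p. g p - lip_const P g * dist p y) ` P) + lip_const P g * dist x y"
  proof
    fix p assume p: "p \<in> P"
    have "g p - lip_const P g * dist p y \<le> Max ((\<lambda>p. g p - lip_const P g * dist p y) ` P)"
      using fin p by (intro Max_ge) auto
    moreover have "dist p y \<le> dist p x + dist x y" by (rule dist_triangle)
    then have "lip_const P g * dist p y \<le> lip_const P g * dist p x + lip_const P g * dist x y"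
      using L0 by (metis distrib_left mult_left_mono)
    ultimately show "g p - lip_const P g * dist p x \<le> Max ((\<lambda>p. g p - lip_const P g * dist p y) ` P) + lip_const P g * dist x y"
      by linarith
  qed
  then show ?thesis using fin ne by (subst Max_le_iff) auto
qed

lemma ext_lip: "\<bar>ext_op P g x - ext_op P g y\<bar> \<le> lip_const P g * dist x y"
proof -
  have "Max ((\<lambda>p. g p - lip_const P g * dist p x) ` P)
   \<le> Max ((\<lambda>p. g p - lip_const P g * dist p y) ` P) + lip_const P g * dist x y"
    "Max ((\<lambda>p. g p - lip_const P g * dist p y) ` P)
   \<le> Max ((\<lambda>p. g p - lip_const P g * dist p x) ` P) + lip_const P g * dist y x"
    using Mx_le by blast+
  moreover have "0 \<le> lip_const P g * dist x y" using lip_nonneg[OF bl] by simp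
  ultimately show ?thesis unfolding ext_op_def by (simp add: dist_commute abs_le_iff max_def)
qed

lemma ext_bound: "\<bar>ext_op P g x\<bar> \<le> sup_norm P g"
proof -
  have "\<forall>p\<in>P. g p - lip_const P g * dist p x \<le> sup_norm P g"
  proof
    fix p assume p: "p \<in> P"
    have "g p \<le> sup_norm P g" using sup_upper[OF bl p] by simp
    moreover have "0 \<le> lip_const P g * dist p x" using lip_nonneg[OF bl] by simp
    ultimately show "g p - lip_const P g * dist p x \<le> sup_norm P g" by linarith
  qed
  then have "Max ((\<lambda>p. g p - lip_const P g * dist p x) ` P) \<le> sup_norm P g"
    using fin ne by (subst Max_le_iff) auto
  moreover have "0 \<le> sup_norm P g" using sup_nonneg[OF bl] .
  ultimately show ?thesis unfolding ext_op_def by (simp add: abs_le_iff max_def)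
qed

lemma ext_agree: assumes x: "x \<in> P" shows "ext_op P g x = g x"
proof -
  have "\<forall>p\<in>P. g p - lip_const P g * dist p x \<le> g x"
  proof
    fix p assume p: "p \<in> P"
    have "\<bar>g p - g x\<bar> \<le> lip_const P g * dist p x" using lip_mult[OF bl p x] .
    then show "g p - lip_const P g * dist p x \<le> g x" by linarith
  qed
  then have a: "Max ((\<lambda>p. g p - lip_const P g * dist p x) ` P) \<le> g x"
    using fin ne by (subst Max_le_iff) auto
  have "g x - lip_const P g * dist x x \<le> Max ((\<lambda>p. g p - lip_const P g * dist p x) ` P)"
    using fin imageI[OF x, of "\<lambda>p. g p - lip_const P g * dist p x"] by (intro Max_ge) simp_all
  then have b: "g x \<le> Max ((\<lambda>p. g p - lip_const P g * dist p x) ` P)" by simp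
  have "\<bar>g x\<bar> \<le> sup_norm P g" using sup_upper[OF bl x] .
  then show ?thesis using a b unfolding ext_op_def by (simp add: max_def abs_le_iff)
qed

lemma ext_ball: assumes "g \<in> unit_ball k P" shows "ext_op P g \<in> unit_ball k UNIV"
proof -
  have n: "nrm k P g \<le> 1" using assms unfolding unit_ball_def by blast
  have s0: "0 \<le> sup_norm P g" and l0: "0 \<le> lip_const P g" using sup_nonneg lip_nonneg bl by auto
  let ?E = "ext_op P g"
  have r: "\<bar>?E y - ?E z\<bar> / dist y z \<le> lip_const P g" if "y \<noteq> z" for y z
    using ext_lip[of y z] that by (simp add: divide_le_eq mult.commute)
  have "?E \<in> Kc k UNIV" unfolding Kc_iff
  proof (intro conjI ballI impI allI)
    fix x show "\<bar>?E x\<bar> \<le> 1" using ext_bound[of x] n l0 by (cases k) (auto simp: nrm_def)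
  next
    fix x y z :: 'a assume "y \<noteq> z"
    then have "\<bar>?E y - ?E z\<bar> / dist y z \<le> lip_const P g" by (rule r)
    then show "cw k * \<bar>?E x\<bar> + \<bar>?E y - ?E z\<bar> / dist y z \<le> 1"
      using ext_bound[of x] n s0 l0 by (cases k) (auto simp: nrm_def cw_def)
  qed simp
  then show ?thesis using unit_ball_Kc by blast
qed

end




lemma coord_cont: "continuous_on A (\<lambda>f::'a \<Rightarrow> real. f p)"
  by (rule continuous_on_subset[OF continuous_on_product_coordinates]) simp

lemma compact_Kc: assumes fin: "finite P" shows "compact (Kc k P)"
proof -
  define Bx :: "('a \<Rightarrow> real) set" where "Bx = PiE UNIV (\<lambda>x. if x \<in> P then {-1..1} else {0})"
  have "compactin (product_topology (\<lambda>i. euclidean) UNIV) Bx"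
    unfolding Bx_def compactin_PiE by simp
  then have cB: "compact Bx" by (simp add: euclidean_product_topology)
  have eq: "Kc k P = (\<Inter>x\<in>-P. {f. f x = 0}) \<inter> (\<Inter>x\<in>P. {f. \<bar>f x\<bar> \<le> 1}) \<inter>
     (\<Inter>x\<in>P. \<Inter>y\<in>P. \<Inter>z\<in>P-{y}. {f. cw k * \<bar>f x\<bar> + \<bar>f y - f z\<bar> / dist y z \<le> 1})"
    by (auto simp: Kc_iff)
  have cl: "closed (Kc k P)" unfolding eq
    by (intro closed_Int closed_INT ballI closed_Collect_eq closed_Collect_le continuous_intros coord_cont) auto
  have sub: "Kc k P \<subseteq> Bx" unfolding Bx_def by (auto simp: PiE_iff Kc_iff abs_le_iff)
  have "Kc k P = Bx \<inter> Kc k P" using sub by blast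
  then show ?thesis using compact_Int_closed[OF cB cl] by simp
qed

lemma sq_identity: "(t * a + (1 - t) * b)\<^sup>2 = t * a\<^sup>2 + (1 - t) * b\<^sup>2 - t * (1 - t) * (a - b)\<^sup>2"
  for t a b :: real by (simp add: power2_eq_square algebra_simps)

lemma exists_ext:
  fixes P :: "'a::metric_space set"
  assumes fin: "finite P"
  shows "\<exists>g\<in>extreme_points (unit_ball k P). \<forall>f\<in>unit_ball k P. mol_integral f mu \<le> mol_integral g mu"
proof -
  let ?K = "unit_ball k P"
  let ?\<Phi> = "\<lambda>f. mol_integral f mu"
  have cK: "compact ?K" using compact_Kc[OF fin] unit_ball_Kc by metis
  have "(\<lambda>_. 0) \<in> Kc k P" unfolding Kc_iff by simp
  then have neK: "?K \<noteq> {}" using unit_ball_Kc by blast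
  obtain g0 where g0: "g0 \<in> ?K" "\<forall>f\<in>?K. ?\<Phi> f \<le> ?\<Phi> g0"
    using continuous_attains_sup[OF cK neK mol_cont] by blast
  define F where "F = ?K \<inter> {f. ?\<Phi> f = ?\<Phi> g0}"
  have cF: "compact F" unfolding F_def
    by (intro compact_Int_closed cK closed_Collect_eq mol_cont continuous_intros)
  have neF: "F \<noteq> {}" using g0 unfolding F_def by blast
  let ?N = "\<lambda>f::'a \<Rightarrow> real. \<Sum>p\<in>P. (f p)\<^sup>2"
  have cN: "continuous_on F ?N" by (intro continuous_intros coord_cont)
  obtain h0 where h0: "h0 \<in> F" "\<forall>f\<in>F. ?N f \<le> ?N h0"
    using continuous_attains_sup[OF cF neF cN] by blast
  have h0K: "h0 \<in> ?K" and h0m: "\<forall>f\<in>?K. ?\<Phi> f \<le> ?\<Phi> h0" using h0 g0 unfolding F_def by auto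
  have "h0 \<in> extreme_points ?K" unfolding extreme_points_def
  proof (intro CollectI conjI ballI allI impI h0K)
    fix g h t assume gK: "g \<in> ?K" and hK: "h \<in> ?K" and th: "0 < t \<and> t < 1 \<and> h0 = (\<lambda>x. t * g x + (1 - t) * h x)"
    then have t0: "0 < t" and t1: "t < 1" and hd: "h0 = (\<lambda>x. t * g x + (1 - t) * h x)" by auto
    have lin: "?\<Phi> h0 = t * ?\<Phi> g + (1 - t) * ?\<Phi> h" unfolding hd by (rule mol_lin)
    have a: "?\<Phi> g \<le> ?\<Phi> h0" "?\<Phi> h \<le> ?\<Phi> h0" using h0m gK hK by auto
    have "?\<Phi> g = ?\<Phi> h0"
    proof (rule ccontr)
      assume "?\<Phi> g \<noteq> ?\<Phi> h0"
      then have "?\<Phi> g < ?\<Phi> h0" using a by simp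
      then have "t * ?\<Phi> g < t * ?\<Phi> h0" using t0 by simp
      moreover have "(1 - t) * ?\<Phi> h \<le> (1 - t) * ?\<Phi> h0" using t1 a by (intro mult_left_mono) auto
      ultimately show False using lin by (simp add: algebra_simps)
    qed
    moreover have "?\<Phi> h = ?\<Phi> h0"
    proof (rule ccontr)
      assume "?\<Phi> h \<noteq> ?\<Phi> h0"
      then have "?\<Phi> h < ?\<Phi> h0" using a by simp
      then have "(1 - t) * ?\<Phi> h < (1 - t) * ?\<Phi> h0" using t1 by simp
      moreover have "t * ?\<Phi> g \<le> t * ?\<Phi> h0" using t0 a by (intro mult_left_mono) auto
      ultimately show False using lin by (simp add: algebra_simps)
    qed
    moreover have "?\<Phi> h0 = ?\<Phi> g0" using h0 unfolding F_def by simp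
    ultimately have "g \<in> F" "h \<in> F" using gK hK unfolding F_def by auto
    then have Ng: "?N g \<le> ?N h0" and Nh: "?N h \<le> ?N h0" using h0 by auto
    have "?N h0 = t * ?N g + (1 - t) * ?N h - t * (1 - t) * (\<Sum>p\<in>P. (g p - h p)\<^sup>2)"
      unfolding hd by (simp add: sq_identity sum.distrib sum_subtractf sum_distrib_left)
    then have "t * (1 - t) * (\<Sum>p\<in>P. (g p - h p)\<^sup>2) \<le> 0"
    proof -
      assume e: "?N h0 = t * ?N g + (1 - t) * ?N h - t * (1 - t) * (\<Sum>p\<in>P. (g p - h p)\<^sup>2)"
      have "t * ?N g \<le> t * ?N h0" using t0 Ng by simp
      moreover have "(1 - t) * ?N h \<le> (1 - t) * ?N h0" using t1 Nh by simp
      ultimately show ?thesis using e by (simp add: algebra_simps)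
    qed
    moreover have "0 < t * (1 - t)" using t0 t1 by simp
    ultimately have "(\<Sum>p\<in>P. (g p - h p)\<^sup>2) \<le> 0"
      using mult_le_cancel_left_pos[of "t * (1 - t)" "\<Sum>p\<in>P. (g p - h p)\<^sup>2" 0] by simp
    then have "\<forall>p\<in>P. (g p - h p)\<^sup>2 = 0" using fin
    proof -
      assume le: "(\<Sum>p\<in>P. (g p - h p)\<^sup>2) \<le> 0"
      have "0 \<le> (\<Sum>p\<in>P. (g p - h p)\<^sup>2)" by (rule sum_nonneg) simp
      then have "(\<Sum>p\<in>P. (g p - h p)\<^sup>2) = 0" using le by linarith
      then show ?thesis using fin by (subst (asm) sum_nonneg_eq_0_iff) auto
    qed
    then have onP: "\<forall>p\<in>P. g p = h p" by simp
    have "\<forall>x. x \<notin> P \<longrightarrow> g x = 0" "\<forall>x. x \<notin> P \<longrightarrow> h x = 0" using gK hK unfolding unit_ball_def is_BL_def by auto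
    then show "g = h" using onP by (metis ext)
  qed
  then show ?thesis using h0m by blast
qed




lemma hP_agree:
  fixes P :: "'a::metric_space set" and g :: "'a \<Rightarrow> real"
  assumes fin: "finite P" and gK: "g \<in> Kc FM P" and one: "\<forall>x\<in>P. \<bar>g x\<bar> = 1"
    and ne: "{p\<in>P. g p = 1} \<noteq> {}" and x: "x \<in> P"
  shows "hP {p\<in>P. g p = 1} x = g x"
proof -
  let ?Q = "{p\<in>P. g p = 1}"
  have finQ: "finite ?Q" using fin by simp
  show ?thesis
  proof (cases "g x = 1")
    case True
    then have xQ: "x \<in> ?Q" using x by simp
    have "1 - dist x x \<le> Max ((\<lambda>p. 1 - dist x p) ` ?Q)"
      using finQ imageI[OF xQ, of "\<lambda>p. 1 - dist x p"] by (intro Max_ge) simp_all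
    moreover have "Max ((\<lambda>p. 1 - dist x p) ` ?Q) \<le> 1"
      using finQ ne by (subst Max_le_iff) auto
    ultimately show ?thesis using True unfolding hP_def by simp
  next
    case False
    then have gx: "g x = -1" using one x by (auto simp: abs_if split: if_splits)
    have "\<forall>p\<in>?Q. 1 - dist x p \<le> -1"
    proof
      fix p assume p: "p \<in> ?Q"
      then have "x \<noteq> p" using gx by auto
      have pP: "p \<in> P" using p by simp
      have "\<bar>g x - g p\<bar> / dist x p \<le> 1" using Kc_ratio[OF gK x pP \<open>x \<noteq> p\<close>] .
      moreover have "0 < dist x p" using \<open>x \<noteq> p\<close> by simp
      ultimately have "2 \<le> dist x p" using gx p by (simp add: divide_le_eq)
      then show "1 - dist x p \<le> -1" by simp
    qed
    then have "Max ((\<lambda>p. 1 - dist x p) ` ?Q) \<le> -1"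
      using finQ ne by (subst Max_le_iff) auto
    then show ?thesis using gx unfolding hP_def by simp
  qed
qed

theorem proposition5p4:
  fixes mu :: "(real \<times> 'a::metric_space) list" and k :: normkind
  shows "\<exists>f \<in> E_set k. dual_norm k mu = mol_integral f mu"
proof -
  define P where "P = insert undefined (snd ` set mu)"
  have fin: "finite P" and ne: "P \<noteq> {}" and sub: "snd ` set mu \<subseteq> P" unfolding P_def by auto
  obtain g0 where g0e: "g0 \<in> extreme_points (unit_ball k P)"
    and gmax: "\<forall>f\<in>unit_ball k P. mol_integral f mu \<le> mol_integral g0 mu"
    using exists_ext[OF fin] by blast
  have g0K: "g0 \<in> unit_ball k P" using g0e unfolding extreme_points_def by blast
  then have g0Kc: "g0 \<in> Kc k P" using unit_ball_Kc by blast
  have blg: "is_BL P g0" using g0K unfolding unit_ball_def by blast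
  let ?E = "ext_op P g0"
  have EK: "?E \<in> unit_ball k UNIV" using ext_ball[OF fin ne blg g0K] .
  have EPhi: "mol_integral ?E mu = mol_integral g0 mu"
    using ext_agree[OF fin ne blg] sub by (intro mol_cong) blast
  have restr: "mol_integral f mu \<le> mol_integral g0 mu" if fK: "f \<in> unit_ball k UNIV" for f
  proof -
    have fKc: "f \<in> Kc k UNIV" using fK unit_ball_Kc by blast
    let ?r = "\<lambda>x. if x \<in> P then f x else 0"
    have "?r \<in> Kc k P" unfolding Kc_iff
    proof (intro conjI allI ballI impI)
      fix x assume "x \<in> P" then show "\<bar>?r x\<bar> \<le> 1" using Kc_bnd[OF fKc] by simp
    next
      fix x y z assume "x \<in> P" "y \<in> P" "z \<in> P" "y \<noteq> z"
      then show "cw k * \<bar>?r x\<bar> + \<bar>?r y - ?r z\<bar> / dist y z \<le> 1"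
        using Kc_tri[OF fKc, of x y z] by simp
    qed simp
    then have "?r \<in> unit_ball k P" using unit_ball_Kc by blast
    then have "mol_integral ?r mu \<le> mol_integral g0 mu" using gmax by blast
    moreover have "mol_integral ?r mu = mol_integral f mu" using sub by (intro mol_cong) auto
    ultimately show ?thesis by simp
  qed
  have dn: "dual_norm k mu = mol_integral g0 mu"
    unfolding dual_norm_def
  proof (rule cSup_eq_maximum)
    show "mol_integral g0 mu \<in> {mol_integral f mu |f. f \<in> unit_ball k UNIV}"
      using EK EPhi by (metis (mono_tags, lifting) mem_Collect_eq)
    fix d assume "d \<in> {mol_integral f mu |f. f \<in> unit_ball k UNIV}"
    then show "d \<le> mol_integral g0 mu" using restr by blast
  qed
  show ?thesis
  proof (cases "g0 \<in> ext_star k P")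
    case True
    have "?E \<in> (\<Union>P\<in>{P. finite P \<and> P \<noteq> {}}. ext_op P ` ext_star k P)"
      using True fin ne by blast
    then have "?E \<in> E_set k" unfolding E_set_def by (cases k) auto
    then show ?thesis using dn EPhi by metis
  next
    case False
    then have one: "\<forall>x\<in>P. \<bar>g0 x\<bar> = 1" using g0e unfolding ext_star_def by blast
    show ?thesis
    proof (cases k)
      case BL
      define c where "c = g0 undefined"
      have uP: "undefined \<in> P" unfolding P_def by simp
      have const: "g0 x = c" if x: "x \<in> P" for x
      proof (cases "x = undefined")
        case False
        have "cw k * \<bar>g0 x\<bar> + \<bar>g0 x - g0 undefined\<bar> / dist x undefined \<le> 1"
          using Kc_tri[OF g0Kc x x uP False] .
        then have "\<bar>g0 x - g0 undefined\<bar> / dist x undefined \<le> 0" using one x BL by (simp add: cw_def)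
        moreover have "0 < dist x undefined" using False by simp
        ultimately have "\<bar>g0 x - g0 undefined\<bar> \<le> 0" by (simp add: divide_le_eq)
        then show ?thesis unfolding c_def by simp
      qed (simp add: c_def)
      have "c = 1 \<or> c = -1" using one uP unfolding c_def by (auto simp: abs_if split: if_splits)
      then have cE: "(\<lambda>_::'a. c) \<in> E_set k" unfolding E_set_def BL by auto
      have "mol_integral (\<lambda>_::'a. c) mu = mol_integral g0 mu" using sub const by (intro mol_cong) auto
      then show ?thesis using cE dn by metis
    next
      case FM
      show ?thesis
      proof (cases "{p\<in>P. g0 p = 1} = {}")
        case True
        have m1: "g0 x = -1" if "x \<in> P" for x using one that True by (auto simp: abs_if split: if_splits)
        have "(\<lambda>_::'a. -1) \<in> Kc FM (UNIV :: 'a set)" unfolding Kc_iff by (simp add: cw_def)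
        then have "(\<lambda>_::'a. -1) \<in> unit_ball FM (UNIV :: 'a set)" using unit_ball_Kc by blast
        then have mm: "(\<lambda>_::'a. -1) \<in> {f \<in> unit_ball FM (UNIV :: 'a set). \<forall>x. \<bar>f x\<bar> = 1}" by simp
        have cE: "(\<lambda>_::'a. -1) \<in> E_set k" unfolding E_set_def FM normkind.case
          by (rule UnI1, rule UnI2, rule mm)
        have "mol_integral (\<lambda>_::'a. -1) mu = mol_integral g0 mu" using sub m1 by (intro mol_cong) auto
        then show ?thesis using cE dn by metis
      next
        case False
        let ?Q = "{p\<in>P. g0 p = 1}"
        have cE: "hP ?Q \<in> E_set k" unfolding E_set_def FM using fin False by auto
        have "mol_integral (hP ?Q) mu = mol_integral g0 mu"
          using sub hP_agree[OF fin g0Kc[unfolded FM] one False] by (intro mol_cong) auto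
        then show ?thesis using cE dn by metis
      qed
    qed
  qed
qed


end
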